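(* Let $P$ be an $L$-dcpo and $x\in P$. If there exists a directed $L$-subset $D\in L^P$ such that $D\le k(x)$ and $\sqcup D=x$, then $k(x)$ is directed and $x=\sqcup k(x)$.
   Context: $L$ is a frame with implication $\to$. $L$-order $e$ on $P$: $e(x,x)=1$, $e(x,y)\wedge e(y,z)\le e(x,z)$, $e(x,y)\wedge e(y,x)=1\Rightarrow x=y$. ${\rm sub}_P(A,B)=\bigwedge_xA(x)\to B(x)$; ${\downarrow}y(x)=e(x,y)$; $\sqcup A=x$ iff $e(x,y)={\rm sub}_P(A,{\downarrow}y)$ for all $y$. Directed: $\bigvee_xD(x)=1$ and $D(x)\wedge D(y)\le\bigvee_zD(z)\wedge e(x,z)\wedge e(y,z)$; ideal: directed lower set ($I(x)\wedge e(y,x)\le I(y)$); $L$-dcpo: every directed $L$-subset has a supremum. ${\Downarrow}x(y)=\bigwedge\{e(x,\sqcup I)\to I(y):I\text{ ideal of }P\}$. $K(P)=\{x:{\Downarrow}x(x)=1\}$; $k(x)\in L^P$ is $k(x)(y)=e(y,x)$ for $y\in K(P)$ and $0$ otherwise. $D\le k(x)$ is pointwise. *)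

theory Defs
  imports Main
begin

text \<open>The frame L is a type 'l of class complete_lattice satisfying the frame law
  (finite meets distribute over arbitrary joins); implication is the Heyting
  implication (right adjoint of meet).\<close>

definition frame_law :: "'l::complete_lattice itself \<Rightarrow> bool" where
  "frame_law _ \<longleftrightarrow> (\<forall>(a::'l) B. inf a (Sup B) = (SUP b\<in>B. inf a b))"

definition limp :: "'l::complete_lattice \<Rightarrow> 'l \<Rightarrow> 'l" where
  "limp a b = Sup {c. inf c a \<le> b}"

text \<open>L-order e on P (P is the whole type 'a).\<close>
definition L_order :: "('a \<Rightarrow> 'a \<Rightarrow> 'l::complete_lattice) \<Rightarrow> bool" where
  "L_order e \<longleftrightarrow> (\<forall>x. e x x = top)
     \<and> (\<forall>x y z. inf (e x y) (e y z) \<le> e x z)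
     \<and> (\<forall>x y. inf (e x y) (e y x) = top \<longrightarrow> x = y)"

definition subP :: "('a \<Rightarrow> 'l::complete_lattice) \<Rightarrow> ('a \<Rightarrow> 'l) \<Rightarrow> 'l" where
  "subP A B = (INF x. limp (A x) (B x))"

definition ldown :: "('a \<Rightarrow> 'a \<Rightarrow> 'l::complete_lattice) \<Rightarrow> 'a \<Rightarrow> 'a \<Rightarrow> 'l" where
  "ldown e y = (\<lambda>x. e x y)"

definition is_lsup :: "('a \<Rightarrow> 'a \<Rightarrow> 'l::complete_lattice) \<Rightarrow> ('a \<Rightarrow> 'l) \<Rightarrow> 'a \<Rightarrow> bool" where
  "is_lsup e A x \<longleftrightarrow> (\<forall>y. e x y = subP A (ldown e y))"

definition lsup :: "('a \<Rightarrow> 'a \<Rightarrow> 'l::complete_lattice) \<Rightarrow> ('a \<Rightarrow> 'l) \<Rightarrow> 'a" where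
  "lsup e A = (THE x. is_lsup e A x)"

definition ldirected :: "('a \<Rightarrow> 'a \<Rightarrow> 'l::complete_lattice) \<Rightarrow> ('a \<Rightarrow> 'l) \<Rightarrow> bool" where
  "ldirected e D \<longleftrightarrow> (SUP x. D x) = top
     \<and> (\<forall>x y. inf (D x) (D y) \<le> (SUP z. inf (D z) (inf (e x z) (e y z))))"

definition lideal :: "('a \<Rightarrow> 'a \<Rightarrow> 'l::complete_lattice) \<Rightarrow> ('a \<Rightarrow> 'l) \<Rightarrow> bool" where
  "lideal e I \<longleftrightarrow> ldirected e I \<and> (\<forall>x y. inf (I x) (e y x) \<le> I y)"

definition L_dcpo :: "('a \<Rightarrow> 'a \<Rightarrow> 'l::complete_lattice) \<Rightarrow> bool" where
  "L_dcpo e \<longleftrightarrow> L_order e \<and> (\<forall>D. ldirected e D \<longrightarrow> (\<exists>x. is_lsup e D x))"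

text \<open>wbelow e x y is the value of the L-subset \<Down>x at y.\<close>
definition wbelow :: "('a \<Rightarrow> 'a \<Rightarrow> 'l::complete_lattice) \<Rightarrow> 'a \<Rightarrow> 'a \<Rightarrow> 'l" where
  "wbelow e x y = (INF I\<in>{I. lideal e I}. limp (e x (lsup e I)) (I y))"

definition compacts :: "('a \<Rightarrow> 'a \<Rightarrow> 'l::complete_lattice) \<Rightarrow> 'a set" where
  "compacts e = {x. wbelow e x x = top}"

definition kset :: "('a \<Rightarrow> 'a \<Rightarrow> 'l::complete_lattice) \<Rightarrow> 'a \<Rightarrow> 'a \<Rightarrow> 'l" where
  "kset e x = (\<lambda>y. if y \<in> compacts e then e y x else bot)"

end

theory Submission
  imports Defs
begin

lemma limp_ge: "inf c a \<le> b \<Longrightarrow> c \<le> limp a b"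
  unfolding limp_def by (rule Sup_upper) simp

lemma frame_inf_SUP:
  assumes "frame_law TYPE('l::complete_lattice)"
  shows "inf (a::'l) (SUP i. f i) = (SUP i. inf a (f i))"
proof -
  have "inf a (Sup (range f)) = (SUP b\<in>range f. inf a b)"
    using assms unfolding frame_law_def by blast
  then show ?thesis by (simp add: image_image)
qed

lemma frame_SUP_inf:
  assumes "frame_law TYPE('l::complete_lattice)"
  shows "inf (SUP i. f i) (a::'l) = (SUP i. inf (f i) a)"
  using frame_inf_SUP[OF assms, of a f] by (simp add: inf_commute)

lemma limp_mp:
  assumes "frame_law TYPE('l::complete_lattice)"
  shows "inf (limp a b) (a::'l) \<le> b"
proof -
  have "inf (Sup {c. inf c a \<le> b}) a = (SUP c\<in>{c. inf c a \<le> b}. inf a c)"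
    using assms unfolding frame_law_def by (simp add: inf_commute)
  also have "\<dots> \<le> b" by (rule SUP_least) (simp add: inf_commute)
  finally show ?thesis unfolding limp_def .
qed

lemma limp_anti: "a' \<le> a \<Longrightarrow> limp a b \<le> limp a' (b::'l::complete_lattice)"
  unfolding limp_def by (rule Sup_subset_mono) (auto intro: order_trans[OF inf_mono])

lemma frame_SUP2:
  assumes "frame_law TYPE('l::complete_lattice)"
    and "\<And>i j. inf (f i) (g j) \<le> (R::'l)"
  shows "inf (SUP i. f i) (SUP j. g j) \<le> R"
proof -
  have "inf (SUP i. f i) (SUP j. g j) = (SUP i. inf (f i) (SUP j. g j))"
    by (rule frame_SUP_inf[OF assms(1)])
  also have "\<dots> = (SUP i. SUP j. inf (f i) (g j))"
    by (rule SUP_cong[OF refl]) (rule frame_inf_SUP[OF assms(1)])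
  also have "\<dots> \<le> R" using assms(2) by (simp add: SUP_least)
  finally show ?thesis .
qed

lemma Lord_trans: "L_order e \<Longrightarrow> inf (e x y) (e y z) \<le> e x z"
  unfolding L_order_def by blast

lemma Lord_refl: "L_order e \<Longrightarrow> e x x = top"
  unfolding L_order_def by blast

lemma lsup_unique:
  assumes "L_order e" "is_lsup e A x" "is_lsup e A x'"
  shows "x = x'"
proof -
  have r1: "e x x = top" "e x' x' = top" using Lord_refl[OF assms(1)] by auto
  have "e x x' = subP A (ldown e x')" using assms(2) unfolding is_lsup_def by blast
  also have "\<dots> = e x' x'" using assms(3) unfolding is_lsup_def by (metis (no_types))
  finally have a: "e x x' = top" using r1 by simp
  have "e x' x = subP A (ldown e x)" using assms(3) unfolding is_lsup_def by blast
  also have "\<dots> = e x x" using assms(2) unfolding is_lsup_def by (metis (no_types))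
  finally have b: "e x' x = top" using r1 by simp
  from a b show ?thesis using assms(1) unfolding L_order_def by auto
qed

lemma lsup_eq: "L_order e \<Longrightarrow> is_lsup e A x \<Longrightarrow> lsup e A = x"
  unfolding lsup_def
  by (rule the_equality) (assumption, rule lsup_unique[symmetric], assumption+)

lemma key_dir:
  assumes fr: "frame_law TYPE('l::complete_lattice)" and Lo: "L_order e"
    and dir: "ldirected e (D::'a \<Rightarrow> 'l)"
  shows "inf (SUP d1. inf (D d1) (e a d1)) (SUP d2. inf (D d2) (e b d2))
     \<le> (SUP w. inf (D w) (inf (e a w) (e b w)))"
proof (rule frame_SUP2[OF fr])
  fix d1 d2
  have "inf (inf (D d1) (e a d1)) (inf (D d2) (e b d2))
      \<le> inf (inf (D d1) (D d2)) (inf (e a d1) (e b d2))"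
    by (simp add: inf_aci)
  also have "\<dots> \<le> inf (SUP w. inf (D w) (inf (e d1 w) (e d2 w))) (inf (e a d1) (e b d2))"
  proof (rule inf_mono[OF _ order_refl])
    show "inf (D d1) (D d2) \<le> (SUP w. inf (D w) (inf (e d1 w) (e d2 w)))"
      using dir unfolding ldirected_def by (elim conjE allE) assumption
  qed
  also have "\<dots> = (SUP w. inf (inf (D w) (inf (e d1 w) (e d2 w))) (inf (e a d1) (e b d2)))"
    by (rule frame_SUP_inf[OF fr])
  also have "\<dots> \<le> (SUP w. inf (D w) (inf (e a w) (e b w)))"
  proof (rule SUP_mono')
    fix w
    have t1: "inf (e a d1) (e d1 w) \<le> e a w" by (rule Lord_trans[OF Lo])
    have t2: "inf (e b d2) (e d2 w) \<le> e b w" by (rule Lord_trans[OF Lo])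
    show "inf (inf (D w) (inf (e d1 w) (e d2 w))) (inf (e a d1) (e b d2))
        \<le> inf (D w) (inf (e a w) (e b w))"
    proof -
      have "inf (inf (D w) (inf (e d1 w) (e d2 w))) (inf (e a d1) (e b d2))
         = inf (D w) (inf (inf (e a d1) (e d1 w)) (inf (e b d2) (e d2 w)))"
        by (simp add: inf_aci)
      also have "\<dots> \<le> inf (D w) (inf (e a w) (e b w))" using t1 t2 by (intro inf_mono order_refl)
      finally show ?thesis .
    qed
  qed
  finally show "inf (inf (D d1) (e a d1)) (inf (D d2) (e b d2))
     \<le> (SUP w. inf (D w) (inf (e a w) (e b w)))" .
qed

theorem lemma5p8:
  fixes e :: "'a \<Rightarrow> 'a \<Rightarrow> 'l::complete_lattice" and x :: 'a
  assumes "frame_law TYPE('l)"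
    and "L_dcpo e"
    and "\<exists>D. ldirected e D \<and> D \<le> kset e x \<and> is_lsup e D x"
  shows "ldirected e (kset e x) \<and> is_lsup e (kset e x) x"
proof -
  note fr = assms(1)
  have Lo: "L_order e" using assms(2) unfolding L_dcpo_def by blast
  obtain D where dir: "ldirected e D" and Dk: "D \<le> kset e x" and Dsup: "is_lsup e D x"
    using assms(3) by blast
  have DkP: "D w \<le> kset e x w" for w using Dk by (simp add: le_fun_def)
  have Dx: "D d \<le> e d x" for d
  proof -
    have "top = subP D (ldown e x)" using Dsup Lord_refl[OF Lo] unfolding is_lsup_def by metis
    also have "\<dots> \<le> limp (D d) (e d x)" unfolding subP_def ldown_def by (rule INF_lower) simp
    finally have "top \<le> limp (D d) (e d x)" .
    hence "limp (D d) (e d x) = top" by (simp add: top_unique)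
    thus ?thesis using limp_mp[OF fr, of "D d" "e d x"] by simp
  qed
  define I where "I = (\<lambda>w. SUP d. inf (D d) (e w d))"
  have DI: "D w \<le> I w" for w
    unfolding I_def by (rule SUP_upper2[of w]) (simp_all add: Lord_refl[OF Lo])
  have Iideal: "lideal e I"
    unfolding lideal_def ldirected_def
  proof (intro conjI allI)
    have "(SUP w. D w) \<le> (SUP w. I w)" using DI by (simp add: SUP_mono')
    thus "(SUP w. I w) = top" using dir unfolding ldirected_def by (simp add: top_unique)
  next
    fix a b
    have "inf (I a) (I b) \<le> (SUP w. inf (D w) (inf (e a w) (e b w)))"
      unfolding I_def by (rule key_dir[OF fr Lo dir])
    also have "\<dots> \<le> (SUP w. inf (I w) (inf (e a w) (e b w)))"
      by (intro SUP_mono' inf_mono order_refl DI)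
    finally show "inf (I a) (I b) \<le> (SUP w. inf (I w) (inf (e a w) (e b w)))" .
  next
    fix a b
    have "inf (I a) (e b a) = (SUP d. inf (inf (D d) (e a d)) (e b a))"
      unfolding I_def by (rule frame_SUP_inf[OF fr])
    also have "\<dots> \<le> I b" unfolding I_def
    proof (rule SUP_mono')
      fix d
      have "inf (e b a) (e a d) \<le> e b d" by (rule Lord_trans[OF Lo])
      have "inf (inf (D d) (e a d)) (e b a) = inf (D d) (inf (e b a) (e a d))" by (simp add: inf_aci)
      also have "\<dots> \<le> inf (D d) (e b d)" using \<open>inf (e b a) (e a d) \<le> e b d\<close> by (intro inf_mono order_refl)
      finally show "inf (inf (D d) (e a d)) (e b a) \<le> inf (D d) (e b d)" .
    qed
    finally show "inf (I a) (e b a) \<le> I b" .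
  qed
  have Isup: "is_lsup e I x"
    unfolding is_lsup_def
  proof
    fix y
    have "subP I (ldown e y) \<le> subP D (ldown e y)"
      unfolding subP_def by (rule INF_mono') (rule limp_anti[OF DI])
    also have "\<dots> = e x y" using Dsup unfolding is_lsup_def by simp
    finally have A: "subP I (ldown e y) \<le> e x y" .
    have "e x y \<le> subP I (ldown e y)"
      unfolding subP_def ldown_def
    proof (rule INF_greatest, rule limp_ge)
      fix w
      have "inf (e x y) (I w) = (SUP d. inf (e x y) (inf (D d) (e w d)))"
        unfolding I_def by (rule frame_inf_SUP[OF fr])
      also have "\<dots> \<le> e w y"
      proof (rule SUP_least)
        fix d
        have "inf (e w d) (e d x) \<le> e w x" by (rule Lord_trans[OF Lo])
        moreover have "inf (e w x) (e x y) \<le> e w y" by (rule Lord_trans[OF Lo])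
        ultimately have "inf (inf (e w d) (e d x)) (e x y) \<le> e w y"
          by (meson inf_mono order_refl order_trans)
        moreover have "inf (e x y) (inf (D d) (e w d)) \<le> inf (inf (e w d) (e d x)) (e x y)"
        proof -
          have "inf (e x y) (inf (D d) (e w d)) = inf (inf (e w d) (D d)) (e x y)" by (simp add: inf_aci)
          also have "\<dots> \<le> inf (inf (e w d) (e d x)) (e x y)" using Dx[of d] by (intro inf_mono order_refl)
          finally show ?thesis .
        qed
        ultimately show "inf (e x y) (inf (D d) (e w d)) \<le> e w y" by (rule order_trans[rotated])
      qed
      finally show "inf (e x y) (I w) \<le> e w y" .
    qed
    with A show "e x y = subP I (ldown e y)" by simp
  qed
  have lsI: "lsup e I = x" by (rule lsup_eq[OF Lo Isup])
  have kI: "kset e x a \<le> I a" for a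
  proof (cases "a \<in> compacts e")
    case True
    hence "wbelow e a a = top" unfolding compacts_def by simp
    hence "top \<le> limp (e a x) (I a)" unfolding wbelow_def
      using Iideal lsI by (metis (mono_tags) INF_lower mem_Collect_eq)
    hence "limp (e a x) (I a) = top" by (simp add: top_unique)
    hence "e a x \<le> I a" using limp_mp[OF fr, of "e a x" "I a"] by simp
    thus ?thesis using True unfolding kset_def by simp
  next
    case False thus ?thesis unfolding kset_def by simp
  qed
  have kdir: "ldirected e (kset e x)"
    unfolding ldirected_def
  proof (intro conjI allI)
    have "(SUP w. D w) \<le> (SUP w. kset e x w)" using DkP by (simp add: SUP_mono')
    thus "(SUP w. kset e x w) = top" using dir unfolding ldirected_def by (simp add: top_unique)
  next
    fix a b
    have "inf (kset e x a) (kset e x b) \<le> inf (I a) (I b)" by (intro inf_mono kI)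
    also have "\<dots> \<le> (SUP w. inf (D w) (inf (e a w) (e b w)))"
      unfolding I_def by (rule key_dir[OF fr Lo dir])
    also have "\<dots> \<le> (SUP w. inf (kset e x w) (inf (e a w) (e b w)))"
      by (intro SUP_mono' inf_mono order_refl DkP)
    finally show "inf (kset e x a) (kset e x b) \<le> (SUP w. inf (kset e x w) (inf (e a w) (e b w)))" .
  qed
  have ksup: "is_lsup e (kset e x) x"
    unfolding is_lsup_def
  proof
    fix y
    have "subP (kset e x) (ldown e y) \<le> subP D (ldown e y)"
      unfolding subP_def by (rule INF_mono') (rule limp_anti[OF DkP])
    also have "\<dots> = e x y" using Dsup unfolding is_lsup_def by simp
    finally have A: "subP (kset e x) (ldown e y) \<le> e x y" .
    have "e x y \<le> subP (kset e x) (ldown e y)"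
      unfolding subP_def ldown_def
    proof (rule INF_greatest, rule limp_ge)
      fix w
      show "inf (e x y) (kset e x w) \<le> e w y"
        unfolding kset_def using Lord_trans[OF Lo, of w x y]
        by (simp add: inf_commute)
    qed
    with A show "e x y = subP (kset e x) (ldown e y)" by simp
  qed
  show ?thesis using kdir ksup by simp
qed

end
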